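(* $\mathrm{NP}/\mathrm{rpoly}=\mathrm{ALL}$, i.e., every promise problem $A=(A_{yes},A_{no})$ over $\{0,1\}^*$ belongs to $\mathrm{NP}/\mathrm{rpoly}$.
   Context: NP/rpoly: $A=(A_{yes},A_{no})\in\mathrm{NP}/\mathrm{rpoly}$ iff there exist a classical probabilistic polynomial-time algorithm $M$ and a family $\{q_s\}_{s\in\mathbb{N}}$ of probability distributions $q_s$ on $\{0,1\}^{\mathrm{poly}(s)}$ (arbitrary, not required to be computable) such that, when $M$ is run on input $(x,b)$ with $b$ sampled from $q_{|x|}$, $\Pr(M\text{ accepts})>0$ if $x\in A_{yes}$ and $\Pr(M\text{ accepts})=0$ if $x\in A_{no}$. ALL denotes the class of all (promise) problems. *)

theory Defs
  imports "HOL-Probability.Probability"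
begin

datatype sym = Blank | Zero | One
datatype move = MoveL | Stay | MoveR

type_synonym tape = "(int \<Rightarrow> sym) \<times> int"

record tm =
  nstates :: nat
  start :: nat
  acc :: nat
  rej :: nat
  delta :: "nat \<Rightarrow> sym \<times> sym \<times> sym \<Rightarrow> nat \<times> (sym \<times> sym \<times> sym) \<times> (move \<times> move \<times> move)"

definition wf_tm :: "tm \<Rightarrow> bool" where
  "wf_tm M \<longleftrightarrow> start M < nstates M \<and> acc M < nstates M \<and> rej M < nstates M
     \<and> acc M \<noteq> rej M \<and> (\<forall>q < nstates M. \<forall>s. fst (delta M q s) < nstates M)"

fun mv :: "move \<Rightarrow> int \<Rightarrow> int" where
  "mv MoveL i = i - 1"
| "mv Stay i = i"
| "mv MoveR i = i + 1"

definition tape_read :: "tape \<Rightarrow> sym" where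
  "tape_read t = fst t (snd t)"

definition tape_step :: "tape \<Rightarrow> sym \<Rightarrow> move \<Rightarrow> tape" where
  "tape_step t a m = ((fst t)(snd t := a), mv m (snd t))"

type_synonym config = "nat \<times> tape \<times> tape \<times> tape"

definition step :: "tm \<Rightarrow> config \<Rightarrow> config" where
  "step M c = (case c of (q, t1, t2, t3) \<Rightarrow>
     if q = acc M \<or> q = rej M then c
     else (case delta M q (tape_read t1, tape_read t2, tape_read t3) of
             (q', (a1, a2, a3), (m1, m2, m3)) \<Rightarrow>
               (q', tape_step t1 a1 m1, tape_step t2 a2 m2, tape_step t3 a3 m3)))"

definition bit_sym :: "bool \<Rightarrow> sym" where
  "bit_sym b = (if b then One else Zero)"

definition init_tape :: "bool list \<Rightarrow> tape" where
  "init_tape w = ((\<lambda>i. if 0 \<le> i \<and> nat i < length w then bit_sym (w ! nat i) else Blank), 0)"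

text \<open>Input x on tape 1, advice b on tape 2, random coins r on tape 3.\<close>
definition init_config :: "tm \<Rightarrow> bool list \<Rightarrow> bool list \<Rightarrow> bool list \<Rightarrow> config" where
  "init_config M x b r = (start M, init_tape x, init_tape b, init_tape r)"

definition run :: "tm \<Rightarrow> nat \<Rightarrow> config \<Rightarrow> config" where
  "run M t c = (step M ^^ t) c"

definition halts_within :: "tm \<Rightarrow> nat \<Rightarrow> bool list \<Rightarrow> bool list \<Rightarrow> bool list \<Rightarrow> bool" where
  "halts_within M T x b r \<longleftrightarrow>
     (\<exists>t\<le>T. fst (run M t (init_config M x b r)) \<in> {acc M, rej M})"

definition accepts :: "tm \<Rightarrow> bool list \<Rightarrow> bool list \<Rightarrow> bool list \<Rightarrow> bool" where
  "accepts M x b r \<longleftrightarrow> (\<exists>t. fst (run M t (init_config M x b r)) = acc M)"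

definition poly_bounded :: "(nat \<Rightarrow> nat) \<Rightarrow> bool" where
  "poly_bounded f \<longleftrightarrow> (\<exists>c k. \<forall>n. f n \<le> c * n ^ k + c)"

definition ppt :: "tm \<Rightarrow> (nat \<Rightarrow> nat) \<Rightarrow> bool" where
  "ppt M rho \<longleftrightarrow> wf_tm M \<and> poly_bounded rho \<and>
     (\<exists>T. poly_bounded T \<and>
        (\<forall>x b r. length r = rho (length x) \<longrightarrow>
           halts_within M (T (length x + length b + length r)) x b r))"

definition accept_prob :: "tm \<Rightarrow> (nat \<Rightarrow> nat) \<Rightarrow> bool list pmf \<Rightarrow> bool list \<Rightarrow> real" where
  "accept_prob M rho q x =
     measure_pmf.prob
       (bind_pmf q (\<lambda>b. map_pmf (\<lambda>r. accepts M x b r)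
                           (pmf_of_set {r. length r = rho (length x)})))
       {True}"

definition promise_problem :: "bool list set \<times> bool list set \<Rightarrow> bool" where
  "promise_problem A \<longleftrightarrow> fst A \<inter> snd A = {}"

definition NP_rpoly :: "(bool list set \<times> bool list set) set" where
  "NP_rpoly = {A. \<exists>M rho (l :: nat \<Rightarrow> nat) (q :: nat \<Rightarrow> bool list pmf).
      ppt M rho \<and> poly_bounded l \<and>
      (\<forall>s. set_pmf (q s) \<subseteq> {b. length b = l s}) \<and>
      (\<forall>x \<in> fst A. accept_prob M rho (q (length x)) x > 0) \<and>
      (\<forall>x \<in> snd A. accept_prob M rho (q (length x)) x = 0)}"

definition ALL_problems :: "(bool list set \<times> bool list set) set" where
  "ALL_problems = {A. promise_problem A}"

end

theory Submission
  imports Defs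
begin

definition dl :: "nat \<Rightarrow> sym \<times> sym \<times> sym \<Rightarrow> nat \<times> (sym \<times> sym \<times> sym) \<times> (move \<times> move \<times> move)" where
  "dl q s = (case s of (a, c, r) \<Rightarrow>
     if a = Blank then ((if c = One then 1 else 2), (a, c, r), (Stay, Stay, Stay))
     else if a = c then (0, (a, c, r), (MoveR, MoveR, Stay))
     else (2, (a, c, r), (Stay, Stay, Stay)))"

definition M0 :: tm where
  "M0 = \<lparr>nstates = 3, start = 0, acc = 1, rej = 2, delta = dl\<rparr>"

definition Tf :: "bool list \<Rightarrow> int \<Rightarrow> sym" where
  "Tf w = fst (init_tape w)"

lemma Tf_at: "Tf w (int k) = (if k < length w then bit_sym (w ! k) else Blank)"
  by (simp add: Tf_def init_tape_def)

lemma wf_M0: "wf_tm M0"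
  by (auto simp: wf_tm_def M0_def dl_def split: prod.splits)

lemma step_halted: "fst c \<in> {1, 2} \<Longrightarrow> step M0 c = c"
  by (cases c) (auto simp: step_def M0_def)

lemma run_halted: "fst c \<in> {1, 2} \<Longrightarrow> run M0 t c = c"
  by (induction t) (auto simp: run_def step_halted)

lemma run_Suc: "run M0 (Suc k) c = step M0 (run M0 k c)"
  by (simp add: run_def)

lemma bit_sym_nb: "bit_sym v \<noteq> Blank"
  by (simp add: bit_sym_def)

lemma bit_sym_eq: "bit_sym v = bit_sym w \<longleftrightarrow> v = w"
  by (simp add: bit_sym_def)

lemma step_mid:
  assumes "k < length x"
  shows "step M0 (0, (Tf x, int k), (Tf b, int k), t3) =
    (if k < length b \<and> b ! k = x ! k then (0, (Tf x, int (Suc k)), (Tf b, int (Suc k)), t3)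
     else (2, (Tf x, int k), (Tf b, int k), t3))"
proof -
  have r1: "tape_read (Tf x, int k) = bit_sym (x ! k)" using assms by (simp add: tape_read_def Tf_at)
  have r2: "tape_read (Tf b, int k) = (if k < length b then bit_sym (b ! k) else Blank)"
    by (simp add: tape_read_def Tf_at)
  have ts: "\<And>t m. tape_step t (tape_read t) m = (fst t, mv m (snd t))"
    by (simp add: tape_step_def tape_read_def)
  have M: "acc M0 = 1" "rej M0 = 2" "delta M0 = dl" by (simp_all add: M0_def)
  have st: "step M0 (0, (Tf x, int k), (Tf b, int k), t3) =
     (case dl 0 (bit_sym (x ! k), tape_read (Tf b, int k), tape_read t3) of
             (q', (a1, a2, a3), (m1, m2, m3)) \<Rightarrow>
               (q', tape_step (Tf x, int k) a1 m1, tape_step (Tf b, int k) a2 m2, tape_step t3 a3 m3))"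
    unfolding step_def M by (simp add: r1)
  show ?thesis
  proof (cases "k < length b \<and> b ! k = x ! k")
    case True
    then have "tape_read (Tf b, int k) = bit_sym (x ! k)" using r2 by simp
    then show ?thesis using True st ts[of "(Tf x, int k)", unfolded r1] ts[of "(Tf b, int k)"] ts[of t3]
      by (simp add: dl_def bit_sym_nb)
  next
    case False
    then have "tape_read (Tf b, int k) \<noteq> bit_sym (x ! k)" using r2 by (auto simp: bit_sym_eq bit_sym_nb[symmetric])
    then show ?thesis using False st ts[of "(Tf x, int k)", unfolded r1] ts[of "(Tf b, int k)"] ts[of t3]
      by (simp add: dl_def bit_sym_nb)
  qed
qed

lemma step_end:
  shows "fst (step M0 (0, (Tf x, int (length x)), (Tf b, int (length x)), t3)) =
    (if length x < length b \<and> b ! length x then 1 else 2)"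
proof -
  have r1: "tape_read (Tf x, int (length x)) = Blank" by (simp add: tape_read_def Tf_at)
  have r2: "tape_read (Tf b, int (length x)) = (if length x < length b then bit_sym (b ! length x) else Blank)"
    by (simp add: tape_read_def Tf_at)
  have M: "acc M0 = 1" "rej M0 = 2" "delta M0 = dl" by (simp_all add: M0_def)
  have st: "fst (step M0 (0, (Tf x, int (length x)), (Tf b, int (length x)), t3)) =
     fst (dl 0 (Blank, tape_read (Tf b, int (length x)), tape_read t3))"
    unfolding step_def M by (simp add: r1 split: prod.splits)
  show ?thesis unfolding st r2 by (simp add: dl_def bit_sym_def)
qed

lemma run_main:
  "k \<le> length x \<Longrightarrow>
    (take k b = take k x \<longrightarrow> run M0 k (init_config M0 x b r) = (0, (Tf x, int k), (Tf b, int k), init_tape r))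
  \<and> (take k b \<noteq> take k x \<longrightarrow> fst (run M0 k (init_config M0 x b r)) = 2)"
proof (induction k)
  case 0
  then show ?case by (simp add: run_def init_config_def M0_def Tf_def init_tape_def)
next
  case (Suc k)
  then have k: "k < length x" by simp
  have tk: "take (Suc k) b = take (Suc k) x \<longleftrightarrow> take k b = take k x \<and> k < length b \<and> b ! k = x ! k"
  proof
    assume h: "take (Suc k) b = take (Suc k) x"
    show "take k b = take k x \<and> k < length b \<and> b ! k = x ! k"
    proof -
      have l: "length (take (Suc k) b) = Suc k" using h k by simp
      have "take k b = take k (take (Suc k) b)" by simp
      also have "\<dots> = take k x" using h by simp
      finally have 1: "take k b = take k x" .
      have 2: "k < length b" using l by simp
      have "b ! k = take (Suc k) b ! k" by simp
      also have "\<dots> = x ! k" using h by simp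
      finally show ?thesis using 1 2 by simp
    qed
  next
    assume "take k b = take k x \<and> k < length b \<and> b ! k = x ! k"
    then show "take (Suc k) b = take (Suc k) x" using k by (simp add: take_Suc_conv_app_nth)
  qed
  show ?case
  proof (cases "take k b = take k x")
    case True
    then show ?thesis using Suc k tk by (simp add: run_Suc step_mid)
  next
    case False
    then show ?thesis using Suc k tk by (simp add: run_Suc step_halted)
  qed
qed

lemma run_add: "run M0 (a + b) c = run M0 a (run M0 b c)"
  by (simp add: run_def funpow_add)

lemma fst_run_n:
  "fst (run M0 (Suc (length x)) (init_config M0 x b r)) =
     (if take (length x) b = x \<and> length x < length b \<and> b ! length x then 1 else 2)"
proof (cases "take (length x) b = x")
  case True
  then have "run M0 (length x) (init_config M0 x b r) = (0, (Tf x, int (length x)), (Tf b, int (length x)), init_tape r)"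
    using run_main[of "length x" x b r] by simp
  then show ?thesis using True by (simp add: run_Suc step_end)
next
  case False
  then have f: "fst (run M0 (length x) (init_config M0 x b r)) = 2"
    using run_main[of "length x" x b r] by simp
  then have "step M0 (run M0 (length x) (init_config M0 x b r)) = run M0 (length x) (init_config M0 x b r)"
    by (intro step_halted) simp
  then show ?thesis using False f by (simp add: run_Suc)
qed

lemma run_after:
  assumes "t \<ge> Suc (length x)"
  shows "run M0 t (init_config M0 x b r) = run M0 (Suc (length x)) (init_config M0 x b r)"
proof -
  obtain d where t: "t = d + Suc (length x)" using assms le_Suc_ex by (metis add.commute)
  show ?thesis unfolding t run_add using fst_run_n[of x b r]
    by (intro run_halted) (auto split: if_splits)
qed

lemma accepts_iff:
  "accepts M0 x b r \<longleftrightarrow> take (length x) b = x \<and> length x < length b \<and> b ! length x"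
proof
  assume "accepts M0 x b r"
  then obtain t where t: "fst (run M0 t (init_config M0 x b r)) = 1"
    by (auto simp: accepts_def M0_def)
  show "take (length x) b = x \<and> length x < length b \<and> b ! length x"
  proof (cases "t \<le> length x")
    case True
    note tle = True
    have "fst (run M0 t (init_config M0 x b r)) \<in> {0, 2}"
    proof (cases "take t b = take t x")
      case True
      then show ?thesis using tle run_main[of t x b r] by simp
    next
      case False
      then show ?thesis using tle run_main[of t x b r] by simp
    qed
    then show ?thesis using t by simp
  next
    case False
    then have "run M0 t (init_config M0 x b r) = run M0 (Suc (length x)) (init_config M0 x b r)"
      using run_after[of x t b r] by simp
    then have "fst (run M0 (Suc (length x)) (init_config M0 x b r)) = 1" using t by simp
    then show ?thesis unfolding fst_run_n[of x b r] by (simp split: if_splits)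
  qed
next
  assume "take (length x) b = x \<and> length x < length b \<and> b ! length x"
  then show "accepts M0 x b r" using fst_run_n[of x b r]
    unfolding accepts_def by (intro exI[of _ "Suc (length x)"]) (simp add: M0_def)
qed

lemma ppt_M0: "ppt M0 (\<lambda>_. 0)"
proof -
  have "halts_within M0 (Suc (length x + length b + length r)) x b r" for x b r
    unfolding halts_within_def using fst_run_n[of x b r]
    by (intro exI[of _ "Suc (length x)"]) (auto simp: M0_def)
  moreover have "poly_bounded (\<lambda>n. Suc n)"
    unfolding poly_bounded_def by (intro exI[of _ 1] exI[of _ 1]) simp
  moreover have "poly_bounded (\<lambda>_. 0)"
    unfolding poly_bounded_def by simp
  ultimately show ?thesis unfolding ppt_def using wf_M0 by blast
qed

lemma accept_prob_M0:
  "accept_prob M0 (\<lambda>_. 0) q x = measure_pmf.prob q {b. accepts M0 x b []}"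
proof -
  have "{r :: bool list. length r = 0} = {[]}" by auto
  then have "accept_prob M0 (\<lambda>_. 0) q x = measure_pmf.prob (map_pmf (\<lambda>b. accepts M0 x b []) q) {True}"
    unfolding accept_prob_def by (simp add: pmf_of_set_singleton map_pmf_def bind_return_pmf)
  also have "\<dots> = measure_pmf.prob q {b. accepts M0 x b []}"
    by (simp add: vimage_def)
  finally show ?thesis .
qed

theorem mainTheorem6:
  shows "NP_rpoly = ALL_problems"
proof
  show "NP_rpoly \<subseteq> ALL_problems"
  proof
    fix A assume "A \<in> NP_rpoly"
    then obtain M rho q where
      y: "\<forall>x \<in> fst A. accept_prob M rho (q (length x)) x > 0" and
      n: "\<forall>x \<in> snd A. accept_prob M rho (q (length x)) x = 0"
      unfolding NP_rpoly_def by blast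
    have "fst A \<inter> snd A = {}"
    proof (rule ccontr)
      assume "fst A \<inter> snd A \<noteq> {}"
      then obtain x where "x \<in> fst A" "x \<in> snd A" by blast
      then show False using y n by fastforce
    qed
    then show "A \<in> ALL_problems" by (simp add: ALL_problems_def promise_problem_def)
  qed
next
  show "ALL_problems \<subseteq> NP_rpoly"
  proof
    fix A assume "A \<in> ALL_problems"
    then have disj: "fst A \<inter> snd A = {}" by (simp add: ALL_problems_def promise_problem_def)
    define Y where "Y s = {y \<in> fst A. length y = s}" for s
    define S where "S s = (\<lambda>y. y @ [True]) ` Y s" for s
    define q where "q s = (if Y s \<noteq> {} then pmf_of_set (S s) else return_pmf (replicate (Suc s) False))" for s
    have finS: "finite (S s)" for s
    proof -
      have "Y s \<subseteq> {y. length y = s}" by (auto simp: Y_def)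
      then have "finite (Y s)" using finite_lists_length_eq[of "UNIV :: bool set" s]
        by (auto intro: finite_subset)
      then show ?thesis by (simp add: S_def)
    qed
    have setq: "set_pmf (q s) = (if Y s \<noteq> {} then S s else {replicate (Suc s) False})" for s
      using finS by (simp add: q_def S_def)
    have lenq: "set_pmf (q s) \<subseteq> {b. length b = Suc s}" for s
      by (auto simp: setq S_def Y_def)
    have pos: "accept_prob M0 (\<lambda>_. 0) (q (length x)) x > 0" if x: "x \<in> fst A" for x
    proof -
      have Yn: "Y (length x) \<noteq> {}" "x \<in> Y (length x)" using x by (auto simp: Y_def)
      have "x @ [True] \<in> set_pmf (q (length x)) \<inter> {b. accepts M0 x b []}"
        using Yn by (auto simp: setq S_def accepts_iff)
      then have "measure_pmf.prob (q (length x)) {b. accepts M0 x b []} \<noteq> 0"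
        unfolding measure_pmf_zero_iff by blast
      then show ?thesis unfolding accept_prob_M0
        using measure_nonneg[of "measure_pmf (q (length x))" "{b. accepts M0 x b []}"] by linarith
    qed
    have rep: "(False # replicate n False) ! n = False" for n by (induction n) auto
    have zero: "accept_prob M0 (\<lambda>_. 0) (q (length x)) x = 0" if x: "x \<in> snd A" for x
    proof -
      have "x \<notin> fst A" using x disj by blast
      then have "set_pmf (q (length x)) \<inter> {b. accepts M0 x b []} = {}"
        using rep[of "length x"] by (auto simp: setq S_def Y_def accepts_iff)
      then show ?thesis unfolding accept_prob_M0 measure_pmf_zero_iff .
    qed
    have "poly_bounded Suc"
      unfolding poly_bounded_def by (intro exI[of _ 1] exI[of _ 1]) simp
    then show "A \<in> NP_rpoly" unfolding NP_rpoly_def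
      using ppt_M0 lenq pos zero by blast
  qed
qed

end
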